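(* Let $t,R,\ell$ be positive integers and $k=2^t$. Let $f$ be given by a level-4 pseudo-expectation functional $\tilde{\mathbb E}_f$ on polynomials in the variables $\{\hat f_\alpha\}$, $\alpha\in\{0,\dots,k-1\}^R$ with $|\alpha|\le\ell$, satisfying $\tilde{\mathbb E}_f\|f\|^4\le1$. Let $\tau=\tilde{\mathbb E}_f\sum_{r=1}^R(\mathrm{Inf}_rf)^2$. Then \[\tilde{\mathbb E}_f\,\mathbb E_{\mathcal X}f^4=\tilde{\mathbb E}_f\,\mathbb E_{\mathcal Y}f^4\pm k^{O(\ell)}\sqrt\tau,\] i.e. there is an absolute constant $C_0$ such that $|\tilde{\mathbb E}_f\mathbb E_{\mathcal X}f^4-\tilde{\mathbb E}_f\mathbb E_{\mathcal Y}f^4|\le k^{C_0\ell}\sqrt\tau$.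
   Context: For $\alpha\in\{0,\dots,k-1\}^R$, $|\alpha|$ is the number of nonzero entries. $f$ denotes the formal multilinear polynomial $f=\sum_{|\alpha|\le\ell}\hat f_\alpha\prod_{r=1}^R Z_{r,\alpha_r}$ evaluated on a sequence of ensembles $Z=(Z_{r,i})_{r\in[R],\,0\le i<k}$. Ensemble $\mathcal X$: identify $\{0,\dots,k-1\}$ with the characters $\chi_0,\dots,\chi_{k-1}$ of $\mathrm{GF}(2)^t$ ($\chi_0\equiv1$), sample $x$ uniformly from $(\mathrm{GF}(2)^t)^R$ and set $X_{r,i}=\chi_i(x_r)$. Ensemble $\mathcal Y$: $Y_{r,0}\equiv1$ and $Y_{r,j}$ ($j\ge1$) are independent unbiased $\{\pm1\}$ variables. Then $\mathbb E_{\mathcal X}f^4$ and $\mathbb E_{\mathcal Y}f^4$ are degree-4 polynomials in the coefficients $\hat f_\alpha$. Also $\|f\|^2=\sum_\alpha\hat f_\alpha^2$ and $\mathrm{Inf}_rf=\sum_{\alpha:\alpha_r\ne0}\hat f_\alpha^2$. A level-4 pseudo-expectation functional is a linear map from polynomials of degree at most 4 in the variables to $\mathbb R$ with $\tilde{\mathbb E}[1]=1$ and $\tilde{\mathbb E}[P^2]\ge0$ for all $P$ of degree at most 2. *)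

theory Defs
  imports Complex_Main "HOL-Library.Multiset" "HOL-Library.FuncSet" "HOL-Combinatorics.Permutations"
begin

definition multi_indices :: "nat \<Rightarrow> nat \<Rightarrow> nat \<Rightarrow> (nat \<Rightarrow> nat) set" where
  "multi_indices k R l = {\<alpha>. (\<forall>r\<ge>R. \<alpha> r = 0) \<and> (\<forall>r<R. \<alpha> r < k)
      \<and> card {r. r < R \<and> \<alpha> r \<noteq> 0} \<le> l}"

definition monomials_upto :: "'v set \<Rightarrow> nat \<Rightarrow> 'v multiset set" where
  "monomials_upto I d = {m. set_mset m \<subseteq> I \<and> size m \<le> d}"

text \<open>A linear functional on polynomials of degree <= 4 in the variables I is determined
  by its values L m on monomials m (with size m <= 4): Ee[sum_m c_m m] = sum_m c_m L m.
  Level-4 pseudo-expectation: Ee[1] = 1 and Ee[P^2] >= 0 for every P of degree <= 2.\<close>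
definition pseudo_exp4 :: "'v set \<Rightarrow> ('v multiset \<Rightarrow> real) \<Rightarrow> bool" where
  "pseudo_exp4 I L \<longleftrightarrow> L {#} = 1 \<and>
     (\<forall>c :: 'v multiset \<Rightarrow> real.
        (\<Sum>m1\<in>monomials_upto I 2. \<Sum>m2\<in>monomials_upto I 2. c m1 * c m2 * L (m1 + m2)) \<ge> 0)"

text \<open>Ee applied to ||f||^4 = (sum_alpha f_alpha^2)^2.\<close>
definition pE_norm4 :: "'v set \<Rightarrow> ('v multiset \<Rightarrow> real) \<Rightarrow> real" where
  "pE_norm4 I L = (\<Sum>\<alpha>\<in>I. \<Sum>\<beta>\<in>I. L {#\<alpha>, \<alpha>, \<beta>, \<beta>#})"

text \<open>tau = Ee sum_{r} (Inf_r f)^2, Inf_r f = sum_{alpha_r /= 0} f_alpha^2.\<close>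
definition pE_tau :: "nat \<Rightarrow> (nat \<Rightarrow> nat) set \<Rightarrow> ((nat \<Rightarrow> nat) multiset \<Rightarrow> real) \<Rightarrow> real" where
  "pE_tau R I L = (\<Sum>r<R. \<Sum>\<alpha>\<in>{\<alpha>\<in>I. \<alpha> r \<noteq> 0}. \<Sum>\<beta>\<in>{\<beta>\<in>I. \<beta> r \<noteq> 0}.
                     L {#\<alpha>, \<alpha>, \<beta>, \<beta>#})"

text \<open>Ee applied to E_Z f^4 for an ensemble Z given by a finite uniform sample space S,
  with Z_{r,i} = val s r i at sample point s. By linearity,
  Ee E_Z f^4 = sum over alpha,beta,gamma,delta of Ee[f_a f_b f_c f_d] E_Z[prod ...].\<close>
definition mono_val :: "nat \<Rightarrow> (nat \<Rightarrow> nat \<Rightarrow> real) \<Rightarrow> (nat \<Rightarrow> nat) \<Rightarrow> real" where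
  "mono_val R v \<alpha> = (\<Prod>r<R. v r (\<alpha> r))"

definition pE_moment4 :: "nat \<Rightarrow> (nat \<Rightarrow> nat) set \<Rightarrow> ((nat \<Rightarrow> nat) multiset \<Rightarrow> real)
    \<Rightarrow> 's set \<Rightarrow> ('s \<Rightarrow> nat \<Rightarrow> nat \<Rightarrow> real) \<Rightarrow> real" where
  "pE_moment4 R I L S val =
     (\<Sum>\<alpha>\<in>I. \<Sum>\<beta>\<in>I. \<Sum>\<gamma>\<in>I. \<Sum>\<delta>\<in>I. L {#\<alpha>, \<beta>, \<gamma>, \<delta>#} *
        ((\<Sum>s\<in>S. mono_val R (val s) \<alpha> * mono_val R (val s) \<beta> * mono_val R (val s) \<gamma>
                   * mono_val R (val s) \<delta>) / real (card S)))"

text \<open>Characters of GF(2)^t: elements of GF(2)^t are encoded as numbers < 2^t (bit vectors);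
  chi_i(x) = (-1)^(<i,x>) for i < 2^t. The set of characters {chi_0,...,chi_{k-1}} is
  identified with {0..k-1} via an arbitrary bijection sigma fixing 0 (so chi_0 = 1).\<close>
definition gf2_char :: "nat \<Rightarrow> nat \<Rightarrow> nat \<Rightarrow> real" where
  "gf2_char t i x = (-1) ^ card {j. j < t \<and> bit i j \<and> bit x j}"

text \<open>Ensemble X: x uniform in (GF(2)^t)^R, X_{r,i} = chi_{sigma i}(x_r).\<close>
definition X_space :: "nat \<Rightarrow> nat \<Rightarrow> (nat \<Rightarrow> nat) set" where
  "X_space t R = {0..<R} \<rightarrow>\<^sub>E {0..<2^t}"

definition X_val :: "nat \<Rightarrow> (nat \<Rightarrow> nat) \<Rightarrow> (nat \<Rightarrow> nat) \<Rightarrow> nat \<Rightarrow> nat \<Rightarrow> real" where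
  "X_val t \<sigma> x r i = gf2_char t (\<sigma> i) (x r)"

text \<open>Ensemble Y: Y_{r,0} = 1, Y_{r,j} (1 <= j < k) independent uniform +-1.\<close>
definition Y_space :: "nat \<Rightarrow> nat \<Rightarrow> (nat \<Rightarrow> nat \<Rightarrow> real) set" where
  "Y_space k R = {0..<R} \<rightarrow>\<^sub>E ({1..<k} \<rightarrow>\<^sub>E {-1, 1})"

definition Y_val :: "(nat \<Rightarrow> nat \<Rightarrow> real) \<Rightarrow> nat \<Rightarrow> nat \<Rightarrow> real" where
  "Y_val y r i = (if i = 0 then 1 else y r i)"

end

theory Submission
  imports Defs
begin

unbundle bit_operations_syntax

lemma card_sd_parity:
  assumes "finite A" "finite B"
  shows "(-1::real)^card A * (-1)^card B = (-1)^card ((A-B) \<union> (B-A))"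
proof -
  have e: "(A-B) \<union> (B-A) = (A \<union> B) - (A \<inter> B)" by auto
  have c1: "card (A \<union> B) + card (A \<inter> B) = card A + card B" using card_Un_Int assms by metis
  have c2: "card ((A-B) \<union> (B-A)) = card (A \<union> B) - card (A \<inter> B)"
    unfolding e using assms by (intro card_Diff_subset) auto
  have c3: "card (A \<inter> B) \<le> card (A \<union> B)" using assms by (intro card_mono) auto
  have "card A + card B = card ((A-B) \<union> (B-A)) + 2 * card (A \<inter> B)" using c1 c2 c3 by simp
  then have "(-1::real)^card A * (-1)^card B = (-1)^card ((A-B) \<union> (B-A)) * ((-1)^2)^card (A \<inter> B)"
    by (metis power_add power_mult)
  then show ?thesis by simp
qed

lemma chi_mult: "gf2_char t i x * gf2_char t i' x = gf2_char t (i XOR i') x"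
proof -
  have "{j. j < t \<and> bit (i XOR i') j \<and> bit x j} =
    ({j. j < t \<and> bit i j \<and> bit x j} - {j. j < t \<and> bit i' j \<and> bit x j}) \<union>
    ({j. j < t \<and> bit i' j \<and> bit x j} - {j. j < t \<and> bit i j \<and> bit x j})"
    by (auto simp: bit_xor_iff)
  then show ?thesis unfolding gf2_char_def by (simp add: card_sd_parity)
qed

lemma chi_mult2: "gf2_char t i x * gf2_char t i x' = gf2_char t i (x XOR x')"
proof -
  have "{j. j < t \<and> bit i j \<and> bit (x XOR x') j} =
    ({j. j < t \<and> bit i j \<and> bit x j} - {j. j < t \<and> bit i j \<and> bit x' j}) \<union>
    ({j. j < t \<and> bit i j \<and> bit x' j} - {j. j < t \<and> bit i j \<and> bit x j})"
    by (auto simp: bit_xor_iff)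
  then show ?thesis unfolding gf2_char_def by (simp add: card_sd_parity)
qed

lemma chi_zero[simp]: "gf2_char t 0 x = 1"
  unfolding gf2_char_def by simp

lemma chi_pow: "j < t \<Longrightarrow> bit i j \<Longrightarrow> gf2_char t i (2^j) = -1"
proof -
  assume a: "j < t" "bit i j"
  have "{j'. j' < t \<and> bit i j' \<and> bit ((2::nat)^j) j'} = {j}" using a by (auto simp: bit_exp_iff)
  then show ?thesis unfolding gf2_char_def by simp
qed

lemma xor_lt: "(x::nat) < 2^t \<Longrightarrow> y < 2^t \<Longrightarrow> x XOR y < 2^t"
proof -
  assume "x < 2^t" "y < 2^t"
  then have "take_bit t (x XOR y) = x XOR y" by (simp add: take_bit_nat_eq_self)
  then show ?thesis by (metis take_bit_nat_less_exp)
qed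

lemma xor_eq0: "((x::nat) XOR y = 0) \<longleftrightarrow> x = y"
proof
  assume "x XOR y = 0"
  then have "\<And>n. bit x n = bit y n" by (metis bit_xor_iff bit_0_eq bot_apply bot_bool_def)
  then show "x = y" by (simp add: bit_eq_iff)
qed simp

lemma chi_orth:
  assumes "i < 2^t" "i \<noteq> 0"
  shows "(\<Sum>x\<in>{0..<2^t}. gf2_char t i x) = 0"
proof -
  obtain j where j: "bit i j" using assms(2) bit_eq_iff[of i 0] by auto
  have "take_bit t i = i" using assms(1) by (simp add: take_bit_nat_eq_self)
  then have jt: "j < t" using j bit_take_bit_iff by metis
  let ?g = "\<lambda>x::nat. x XOR 2^j"
  have "(\<Sum>x\<in>{0..<2^t}. gf2_char t i x) = (\<Sum>x\<in>{0..<2^t}. gf2_char t i (?g x))"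
    apply (rule sum.reindex_bij_witness[of _ ?g ?g])
    using jt by (auto simp: xor_lt xor.assoc)
  also have "\<dots> = - (\<Sum>x\<in>{0..<2^t}. gf2_char t i x)"
    by (simp add: chi_mult2[symmetric] chi_pow[OF jt j] sum_negf)
  finally show ?thesis by simp
qed


definition xcond :: "(nat \<Rightarrow> nat) \<Rightarrow> nat \<Rightarrow> nat \<Rightarrow> nat \<Rightarrow> nat \<Rightarrow> bool" where
  "xcond \<sigma> a b c d \<longleftrightarrow> \<sigma> a XOR \<sigma> b XOR \<sigma> c XOR \<sigma> d = 0"

definition cnt4 :: "nat \<Rightarrow> nat \<Rightarrow> nat \<Rightarrow> nat \<Rightarrow> nat \<Rightarrow> nat" where
  "cnt4 j a b c d = (if a = j then 1 else 0) + (if b = j then 1 else 0) + (if c = j then 1 else 0) + (if d = j then 1 else 0)"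

definition ycond :: "nat \<Rightarrow> nat \<Rightarrow> nat \<Rightarrow> nat \<Rightarrow> bool" where
  "ycond a b c d \<longleftrightarrow> (\<forall>j. j \<noteq> 0 \<longrightarrow> even (cnt4 j a b c d))"

lemma even_le4: "even (n::nat) \<Longrightarrow> n \<le> 4 \<Longrightarrow> n = 0 \<or> n = 2 \<or> n = 4"
  by presburger

lemma ycond_pair: "ycond a b c d \<Longrightarrow> (a=b \<and> c=d) \<or> (a=c \<and> b=d) \<or> (a=d \<and> b=c)"
proof -
  assume y: "ycond a b c d"
  have h: "\<And>j. j \<noteq> 0 \<Longrightarrow> even (cnt4 j a b c d)" using y unfolding ycond_def by auto
  have hh: "\<And>j. j \<noteq> 0 \<Longrightarrow> odd (cnt4 j a b c d) \<Longrightarrow> False" using h by blast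
  show ?thesis
  proof (cases "a = b")
    case ab: True
    show ?thesis
    proof (rule ccontr)
      assume "\<not> ?thesis"
      then have cd: "c \<noteq> d" using ab by auto
      show False
      proof (cases "c = 0")
        case True
        then have "d \<noteq> 0" using cd by auto
        then show False using hh[of d] ab True cd by (simp add: cnt4_def)
      next
        case False
        then show False using hh[of c] ab cd by (simp add: cnt4_def)
      qed
    qed
  next
    case ab: False
    show ?thesis
    proof (cases "a = 0")
      case a0: False
      have "(c = a \<and> d \<noteq> a) \<or> (d = a \<and> c \<noteq> a)"
        using h[OF a0] ab by (auto simp: cnt4_def split: if_splits)
      then show ?thesis
      proof
        assume ca: "c = a \<and> d \<noteq> a"
        have "b = d"
        proof (rule ccontr)
          assume bd: "b \<noteq> d"
          show False
          proof (cases "b = 0")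
            case True
            then show False using hh[of d] bd ca ab by (simp add: cnt4_def)
          next
            case False
            then show False using hh[of b] bd ca ab by (simp add: cnt4_def)
          qed
        qed
        then show ?thesis using ca by auto
      next
        assume da: "d = a \<and> c \<noteq> a"
        have "b = c"
        proof (rule ccontr)
          assume bc: "b \<noteq> c"
          show False
          proof (cases "b = 0")
            case True
            then show False using hh[of c] bc da ab by (simp add: cnt4_def)
          next
            case False
            then show False using hh[of b] bc da ab by (simp add: cnt4_def)
          qed
        qed
        then show ?thesis using da by auto
      qed
    next
      case a0: True
      then have b0: "b \<noteq> 0" using ab by auto
      have "(c = b \<and> d \<noteq> b) \<or> (d = b \<and> c \<noteq> b)"
        using h[OF b0] ab by (auto simp: cnt4_def split: if_splits)
      then show ?thesis
      proof
        assume cb: "c = b \<and> d \<noteq> b"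
        have "d = 0"
        proof (rule ccontr)
          assume "d \<noteq> 0"
          then show False using hh[of d] cb a0 by (simp add: cnt4_def)
        qed
        then show ?thesis using cb a0 by auto
      next
        assume db: "d = b \<and> c \<noteq> b"
        have "c = 0"
        proof (rule ccontr)
          assume "c \<noteq> 0"
          then show False using hh[of c] db a0 by (simp add: cnt4_def)
        qed
        then show ?thesis using db a0 by auto
      qed
    qed
  qed
qed

lemma X_coord:
  assumes "\<sigma> permutes {0..<2^t}" "a < 2^t" "b < 2^t" "c < 2^t" "d < 2^t"
  shows "(\<Sum>v\<in>{0..<2^t}. gf2_char t (\<sigma> a) v * gf2_char t (\<sigma> b) v * gf2_char t (\<sigma> c) v
            * gf2_char t (\<sigma> d) v) / 2^t = (if xcond \<sigma> a b c d then 1 else 0)"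
proof -
  have s: "\<sigma> a < 2^t" "\<sigma> b < 2^t" "\<sigma> c < 2^t" "\<sigma> d < 2^t"
    using assms permutes_in_image[OF assms(1)] by auto
  let ?w = "\<sigma> a XOR \<sigma> b XOR \<sigma> c XOR \<sigma> d"
  have w: "?w < 2^t" using s by (simp add: xor_lt)
  have "\<And>v. gf2_char t (\<sigma> a) v * gf2_char t (\<sigma> b) v * gf2_char t (\<sigma> c) v
            * gf2_char t (\<sigma> d) v = gf2_char t ?w v"
    by (simp add: chi_mult xor.assoc)
  then have e: "(\<Sum>v\<in>{0..<2^t}. gf2_char t (\<sigma> a) v * gf2_char t (\<sigma> b) v * gf2_char t (\<sigma> c) v
            * gf2_char t (\<sigma> d) v) = (\<Sum>v\<in>{0..<2^t}. gf2_char t ?w v)" by simp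
  show ?thesis
  proof (cases "?w = 0")
    case True
    then show ?thesis unfolding e xcond_def by simp
  next
    case False
    then show ?thesis unfolding e xcond_def using chi_orth[OF w False] by simp
  qed
qed

definition gY :: "(nat \<Rightarrow> real) \<Rightarrow> nat \<Rightarrow> real" where
  "gY z x = (if x = 0 then 1 else z x)"

lemma gY_sq: "z \<in> {1..<k} \<rightarrow>\<^sub>E {-1,1} \<Longrightarrow> x < k \<Longrightarrow> gY z x * gY z x = 1"
proof (cases "x = 0")
  case False
  assume z: "z \<in> {1..<k} \<rightarrow>\<^sub>E {-1,1}" and x: "x < k"
  then have "z x \<in> {-1,1}" using False by (auto simp: PiE_iff)
  then show ?thesis unfolding gY_def using False by auto
qed (simp add: gY_def)

lemma Y_coord:
  assumes "a < k" "b < k" "c < k" "d < k"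
  shows "(\<Sum>z\<in>{1..<k} \<rightarrow>\<^sub>E {-1,1}. gY z a * gY z b * gY z c * gY z d) / 2^(k-1)
     = (if ycond a b c d then 1 else 0)"
proof (cases "ycond a b c d")
  case True
  have "\<And>z. z \<in> {1..<k} \<rightarrow>\<^sub>E {-1,1} \<Longrightarrow> gY z a * gY z b * gY z c * gY z d = 1"
  proof -
    fix z assume z: "z \<in> {1..<k} \<rightarrow>\<^sub>E {-1::real,1}"
    have sq: "\<And>x. x < k \<Longrightarrow> gY z x * gY z x = 1" using gY_sq[OF z] .
    have e1: "gY z a * gY z b * gY z c * gY z d = (gY z a * gY z b) * (gY z c * gY z d)"
      by (simp add: mult.assoc)
    have e2: "gY z a * gY z b * gY z c * gY z d = (gY z a * gY z c) * (gY z b * gY z d)"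
      by (simp add: mult_ac)
    have e3: "gY z a * gY z b * gY z c * gY z d = (gY z a * gY z d) * (gY z b * gY z c)"
      by (simp add: mult_ac)
    from ycond_pair[OF True] show "gY z a * gY z b * gY z c * gY z d = 1"
    proof (elim disjE conjE)
      assume "a = b" "c = d" then show ?thesis using e1 sq assms by simp
    next
      assume "a = c" "b = d" then show ?thesis using e2 sq assms by simp
    next
      assume "a = d" "b = c" then show ?thesis using e3 sq assms by simp
    qed
  qed
  then have "(\<Sum>z\<in>{1..<k} \<rightarrow>\<^sub>E {-1,1}. gY z a * gY z b * gY z c * gY z d) = card ({1..<k} \<rightarrow>\<^sub>E {-1::real,1})"
    by simp
  also have "\<dots> = 2^(k-1)" by (simp add: card_PiE)
  finally show ?thesis using True by simp
next
  case False
  then obtain j where j: "j \<noteq> 0" "odd (cnt4 j a b c d)" unfolding ycond_def by auto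
  have jk: "j \<in> {1..<k}" using j assms unfolding cnt4_def by (auto split: if_splits)
  let ?S = "{1..<k} \<rightarrow>\<^sub>E {-1::real,1}"
  let ?f = "\<lambda>z::nat\<Rightarrow>real. z(j := - z j)"
  let ?G = "\<lambda>z. gY z a * gY z b * gY z c * gY z d"
  have fl: "\<And>x z. gY (?f z) x = (if x = j then -1 else 1) * gY z x"
    unfolding gY_def using j by auto
  have sg: "(if a = j then -1 else 1) * (if b = j then -1 else 1) * (if c = j then -1 else 1) * (if d = j then -1 else (1::real))
      = (-1) ^ cnt4 j a b c d"
    unfolding cnt4_def by (simp add: power_add)
  have G: "\<And>z. ?G (?f z) = - ?G z"
  proof -
    fix z
    have "?G (?f z) = ((if a = j then -1 else 1) * (if b = j then -1 else 1) * (if c = j then -1 else 1) * (if d = j then -1 else (1::real))) * ?G z"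
      unfolding fl by (simp only: mult_ac)
    also have "\<dots> = - ?G z" unfolding sg using j(2) by simp
    finally show "?G (?f z) = - ?G z" .
  qed
  have "sum ?G ?S = sum (\<lambda>z. ?G (?f z)) ?S"
    apply (rule sum.reindex_bij_witness[of _ ?f ?f])
    using jk by (auto simp: PiE_iff extensional_def)
  also have "\<dots> = - sum ?G ?S" by (simp add: G sum_negf)
  finally have "sum ?G ?S = 0" by simp
  then show ?thesis using False by simp
qed


lemma X_moment:
  assumes sp: "\<sigma> permutes {0..<2^t}"
    and lt: "\<And>r. r < R \<Longrightarrow> \<alpha> r < 2^t \<and> \<beta> r < 2^t \<and> \<gamma> r < 2^t \<and> \<delta> r < 2^t"
  shows "(\<Sum>x\<in>X_space t R. mono_val R (X_val t \<sigma> x) \<alpha> * mono_val R (X_val t \<sigma> x) \<beta>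
             * mono_val R (X_val t \<sigma> x) \<gamma> * mono_val R (X_val t \<sigma> x) \<delta>) / real (card (X_space t R))
       = (\<Prod>r<R. if xcond \<sigma> (\<alpha> r) (\<beta> r) (\<gamma> r) (\<delta> r) then 1 else 0)"
proof -
  define F where "F r v = gf2_char t (\<sigma> (\<alpha> r)) v * gf2_char t (\<sigma> (\<beta> r)) v
     * gf2_char t (\<sigma> (\<gamma> r)) v * gf2_char t (\<sigma> (\<delta> r)) v" for r v
  have m: "mono_val R (X_val t \<sigma> x) \<alpha> * mono_val R (X_val t \<sigma> x) \<beta>
             * mono_val R (X_val t \<sigma> x) \<gamma> * mono_val R (X_val t \<sigma> x) \<delta> = (\<Prod>r\<in>{0..<R}. F r (x r))" for x
    unfolding mono_val_def X_val_def F_def by (simp add: prod.distrib atLeast0LessThan)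
  have s: "(\<Sum>x\<in>X_space t R. \<Prod>r\<in>{0..<R}. F r (x r)) = (\<Prod>r\<in>{0..<R}. \<Sum>v\<in>{0..<2^t}. F r v)"
    unfolding X_space_def by (rule prod_sum_PiE[symmetric]) auto
  have c: "real (card (X_space t R)) = (\<Prod>r\<in>{0..<R}. 2^t)"
    unfolding X_space_def by (simp add: card_PiE)
  have "(\<Prod>r\<in>{0..<R}. if xcond \<sigma> (\<alpha> r) (\<beta> r) (\<gamma> r) (\<delta> r) then 1 else 0) =
     (\<Prod>r\<in>{0..<R}. (\<Sum>v\<in>{0..<2^t}. F r v) / 2^t)"
    unfolding F_def
    by (rule prod.cong[OF refl], rule X_coord[OF sp, symmetric]) (use lt in auto)
  also have "\<dots> = (\<Prod>r\<in>{0..<R}. \<Sum>v\<in>{0..<2^t}. F r v) / (\<Prod>r\<in>{0..<R}. 2^t)"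
    by (rule prod_dividef)
  finally show ?thesis unfolding m s c by (simp only: atLeast0LessThan)
qed

lemma Y_moment:
  assumes lt: "\<And>r. r < R \<Longrightarrow> \<alpha> r < k \<and> \<beta> r < k \<and> \<gamma> r < k \<and> \<delta> r < k"
  shows "(\<Sum>y\<in>Y_space k R. mono_val R (Y_val y) \<alpha> * mono_val R (Y_val y) \<beta>
             * mono_val R (Y_val y) \<gamma> * mono_val R (Y_val y) \<delta>) / real (card (Y_space k R))
       = (\<Prod>r<R. if ycond (\<alpha> r) (\<beta> r) (\<gamma> r) (\<delta> r) then 1 else 0)"
proof -
  define F where "F r z = gY z (\<alpha> r) * gY z (\<beta> r) * gY z (\<gamma> r) * gY z (\<delta> r)" for r z
  have m: "mono_val R (Y_val y) \<alpha> * mono_val R (Y_val y) \<beta>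
             * mono_val R (Y_val y) \<gamma> * mono_val R (Y_val y) \<delta> = (\<Prod>r\<in>{0..<R}. F r (y r))" for y
    unfolding mono_val_def Y_val_def F_def gY_def by (simp add: prod.distrib atLeast0LessThan)
  have s: "(\<Sum>y\<in>Y_space k R. \<Prod>r\<in>{0..<R}. F r (y r)) = (\<Prod>r\<in>{0..<R}. \<Sum>z\<in>{1..<k} \<rightarrow>\<^sub>E {-1,1}. F r z)"
    unfolding Y_space_def by (rule prod_sum_PiE[symmetric]) (auto intro!: finite_PiE)
  have c: "real (card (Y_space k R)) = (\<Prod>r\<in>{0..<R}. 2^(k-1))"
    unfolding Y_space_def by (simp add: card_PiE)
  have "(\<Prod>r\<in>{0..<R}. if ycond (\<alpha> r) (\<beta> r) (\<gamma> r) (\<delta> r) then 1 else 0) =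
     (\<Prod>r\<in>{0..<R}. (\<Sum>z\<in>{1..<k} \<rightarrow>\<^sub>E {-1,1}. F r z) / 2^(k-1))"
    unfolding F_def
    by (rule prod.cong[OF refl], rule Y_coord[symmetric]) (use lt in auto)
  also have "\<dots> = (\<Prod>r\<in>{0..<R}. \<Sum>z\<in>{1..<k} \<rightarrow>\<^sub>E {-1,1}. F r z) / (\<Prod>r\<in>{0..<R}. 2^(k-1))"
    by (rule prod_dividef)
  finally show ?thesis unfolding m s c by (simp only: atLeast0LessThan)
qed


definition red1 :: "nat \<Rightarrow> nat \<Rightarrow> nat" where "red1 a b = (if a = b then 0 else a)"
definition red2 :: "nat \<Rightarrow> nat \<Rightarrow> nat" where "red2 a b = (if a = b then 0 else b)"

lemma xcond_alt: "xcond \<sigma> a b c d \<longleftrightarrow> \<sigma> a XOR \<sigma> b = \<sigma> c XOR \<sigma> d"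
  unfolding xcond_def by (metis xor_eq0 xor.assoc)

lemma xcond_red: "\<sigma> 0 = 0 \<Longrightarrow> xcond \<sigma> a b c d = xcond \<sigma> (red1 a b) (red2 a b) (red1 c d) (red2 c d)"
  unfolding xcond_alt red1_def red2_def by auto

lemma even_cnt_red: "j \<noteq> 0 \<Longrightarrow> even (cnt4 j a b c d) \<longleftrightarrow> even (cnt4 j (red1 a b) (red2 a b) (red1 c d) (red2 c d))"
  unfolding cnt4_def red1_def red2_def by auto

lemma ycond_red: "ycond a b c d = ycond (red1 a b) (red2 a b) (red1 c d) (red2 c d)"
  unfolding ycond_def using even_cnt_red by blast

lemma ycond_xcond: "ycond a b c d \<Longrightarrow> xcond \<sigma> a b c d"
  using ycond_pair[of a b c d] unfolding xcond_alt by (auto simp: xor.commute)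

lemma xcond_00: "\<sigma> permutes S \<Longrightarrow> \<sigma> 0 = 0 \<Longrightarrow> xcond \<sigma> 0 0 c d \<Longrightarrow> c = d"
  unfolding xcond_alt using permutes_inj[of \<sigma> S] by (auto simp: inj_eq xor_eq0)

lemma xcond_det: "\<sigma> permutes S \<Longrightarrow> xcond \<sigma> a b c d \<Longrightarrow> xcond \<sigma> a b c d' \<Longrightarrow> d = d'"
proof -
  assume p: "\<sigma> permutes S" and x: "xcond \<sigma> a b c d" "xcond \<sigma> a b c d'"
  have "\<sigma> d = \<sigma> a XOR \<sigma> b XOR \<sigma> c" "\<sigma> d' = \<sigma> a XOR \<sigma> b XOR \<sigma> c"
    using x unfolding xcond_def by (metis xor_eq0 xor.assoc)+
  then have "\<sigma> d = \<sigma> d'" by simp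
  then show "d = d'" using permutes_inj[OF p] by (metis injD)
qed

lemma heavy_of:
  assumes p: "\<sigma> permutes S" and z: "\<sigma> 0 = 0" and x: "xcond \<sigma> a b c d" and y: "\<not> ycond a b c d"
  shows "(a \<noteq> 0 \<and> b \<noteq> 0) \<or> (c \<noteq> 0 \<and> d \<noteq> 0)"
proof (rule ccontr)
  have inj: "\<And>u v. \<sigma> u = \<sigma> v \<longleftrightarrow> u = v" using permutes_inj[OF p] by (auto simp: inj_eq)
  assume "\<not> ?thesis"
  then have h: "(a = 0 \<or> b = 0) \<and> (c = 0 \<or> d = 0)" by auto
  have "ycond a b c d"
    using h x unfolding xcond_alt ycond_def cnt4_def
    by (auto simp: z inj)
  then show False using y by simp
qed


definition Lq :: "('v multiset \<Rightarrow> real) \<Rightarrow> 'v \<times> 'v \<Rightarrow> 'v \<times> 'v \<Rightarrow> real" where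
  "Lq L p q = L {#fst p, snd p, fst q, snd q#}"

definition Qs :: "('v multiset \<Rightarrow> real) \<Rightarrow> ('v \<times> 'v) set \<Rightarrow> ('v \<times> 'v) set \<Rightarrow> real" where
  "Qs L A B = (\<Sum>p\<in>A. \<Sum>q\<in>B. Lq L p q)"

lemma Lq_sym: "Lq L p q = Lq L q p"
  unfolding Lq_def by (simp add: add_mset_commute)

lemma Qs_sym: "Qs L A B = Qs L B A"
  unfolding Qs_def by (subst sum.swap) (simp add: Lq_sym)

lemma finite_mon: "finite I \<Longrightarrow> finite (monomials_upto I n)"
proof -
  assume f: "finite I"
  have "monomials_upto I n \<subseteq> mset ` {xs. set xs \<subseteq> I \<and> length xs \<le> n}"
  proof
    fix m assume "m \<in> monomials_upto I n"
    then have m: "set_mset m \<subseteq> I" "size m \<le> n" unfolding monomials_upto_def by auto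
    obtain xs where "mset xs = m" using ex_mset by blast
    then show "m \<in> mset ` {xs. set xs \<subseteq> I \<and> length xs \<le> n}" using m by auto
  qed
  then show ?thesis using finite_lists_length_le[OF f] finite_surj by blast
qed

lemma fib_sum:
  fixes \<phi> :: "'a \<Rightarrow> real"
  assumes "finite S" "finite T" "g ` S \<subseteq> T"
  shows "(\<Sum>m\<in>T. (\<Sum>p\<in>{p\<in>S. g p = m}. \<phi> p) * H m) = (\<Sum>p\<in>S. \<phi> p * H (g p))"
proof -
  have "(\<Sum>m\<in>T. (\<Sum>p\<in>{p\<in>S. g p = m}. \<phi> p) * H m) = (\<Sum>m\<in>T. \<Sum>p\<in>{p\<in>S. g p = m}. \<phi> p * H (g p))"
    by (rule sum.cong[OF refl]) (auto simp: sum_distrib_right intro!: sum.cong)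
  also have "\<dots> = (\<Sum>p\<in>S. \<phi> p * H (g p))"
    using sum.group[OF assms, of "\<lambda>p. \<phi> p * H (g p)"] by simp
  finally show ?thesis .
qed

lemma psd:
  fixes L :: "'v multiset \<Rightarrow> real"
  assumes fI: "finite I" and pe: "pseudo_exp4 I L"
  shows "0 \<le> (\<Sum>p\<in>I\<times>I. \<Sum>q\<in>I\<times>I. \<phi> p * \<phi> q * Lq L p q)"
proof -
  define M where "M = monomials_upto I 2"
  define mp where "mp p = {#fst p, snd p#}" for p :: "'v \<times> 'v"
  define c where "c m = (\<Sum>p\<in>{p\<in>I\<times>I. mp p = m}. \<phi> p)" for m
  have fM: "finite M" unfolding M_def using finite_mon[OF fI] .
  have fS: "finite (I \<times> I)" using fI by simp
  have img: "mp ` (I \<times> I) \<subseteq> M" unfolding M_def monomials_upto_def mp_def by auto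
  have "0 \<le> (\<Sum>m1\<in>M. \<Sum>m2\<in>M. c m1 * c m2 * L (m1 + m2))"
    using pe unfolding pseudo_exp4_def M_def by blast
  also have "(\<Sum>m1\<in>M. \<Sum>m2\<in>M. c m1 * c m2 * L (m1 + m2))
      = (\<Sum>m1\<in>M. c m1 * (\<Sum>m2\<in>M. c m2 * L (m1 + m2)))"
    by (simp add: sum_distrib_left mult.assoc)
  also have "\<dots> = (\<Sum>p\<in>I\<times>I. \<phi> p * (\<Sum>m2\<in>M. c m2 * L (mp p + m2)))"
    unfolding c_def by (rule fib_sum[OF fS fM img])
  also have "\<dots> = (\<Sum>p\<in>I\<times>I. \<phi> p * (\<Sum>m2\<in>M. c m2 * L (m2 + mp p)))"
    by (simp add: add.commute)
  also have "\<dots> = (\<Sum>p\<in>I\<times>I. \<phi> p * (\<Sum>q\<in>I\<times>I. \<phi> q * L (mp q + mp p)))"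
    unfolding c_def by (subst fib_sum[OF fS fM img]) rule
  also have "\<dots> = (\<Sum>p\<in>I\<times>I. \<Sum>q\<in>I\<times>I. \<phi> p * \<phi> q * Lq L p q)"
    unfolding Lq_def mp_def by (simp add: sum_distrib_left mult.assoc add_mset_commute)
  finally show ?thesis .
qed

lemma ind_sum: fixes f :: "'a \<Rightarrow> real" shows "finite Z \<Longrightarrow> A \<subseteq> Z \<Longrightarrow> (\<Sum>p\<in>Z. (if p \<in> A then 1 else 0) * f p) = sum f A"
proof -
  assume "finite Z" "A \<subseteq> Z"
  then have "(\<Sum>p\<in>Z. (if p \<in> A then 1 else 0) * f p) = (\<Sum>p\<in>Z. if p \<in> A then f p else 0)"
    by (intro sum.cong) auto
  also have "\<dots> = sum f (Z \<inter> A)" using \<open>finite Z\<close> by (rule sum.inter_restrict[symmetric])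
  also have "Z \<inter> A = A" using \<open>A \<subseteq> Z\<close> by auto
  finally show ?thesis .
qed

lemma ind2: "finite Z \<Longrightarrow> A \<subseteq> Z \<Longrightarrow> B \<subseteq> Z \<Longrightarrow>
  (\<Sum>p\<in>Z. \<Sum>q\<in>Z. ((if p \<in> A then 1 else 0) * (if q \<in> B then 1 else 0)) * Lq L p q) = Qs L A B"
proof -
  assume a: "finite Z" "A \<subseteq> Z" "B \<subseteq> Z"
  have "(\<Sum>p\<in>Z. \<Sum>q\<in>Z. ((if p \<in> A then 1 else 0) * (if q \<in> B then 1 else 0)) * Lq L p q)
     = (\<Sum>p\<in>Z. (if p \<in> A then 1 else 0) * (\<Sum>q\<in>Z. (if q \<in> B then 1 else 0) * Lq L p q))"
    by (simp add: sum_distrib_left mult.assoc)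
  also have "\<dots> = (\<Sum>p\<in>Z. (if p \<in> A then 1 else 0) * (\<Sum>q\<in>B. Lq L p q))"
    using a by (simp add: ind_sum)
  also have "\<dots> = Qs L A B" unfolding Qs_def using a by (simp add: ind_sum)
  finally show ?thesis .
qed

lemma expand:
  fixes L :: "'v multiset \<Rightarrow> real"
  assumes fI: "finite I" and pe: "pseudo_exp4 I L" and A: "A \<subseteq> I \<times> I" and B: "B \<subseteq> I \<times> I"
  shows "0 \<le> x*x * Qs L A A + 2*x*y * Qs L A B + y*y * Qs L B B"
proof -
  define iA where "iA p = (if p \<in> A then 1 else (0::real))" for p
  define iB where "iB p = (if p \<in> B then 1 else (0::real))" for p
  let ?Z = "I \<times> I"
  have fZ: "finite ?Z" using fI by simp
  have e: "(x * iA p + y * iB p) * (x * iA q + y * iB q) * Lq L p q =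
      x*x * ((iA p * iA q) * Lq L p q) + x*y * ((iA p * iB q) * Lq L p q)
      + y*x * ((iB p * iA q) * Lq L p q) + y*y * ((iB p * iB q) * Lq L p q)" for p q
    by (simp add: algebra_simps)
  have "0 \<le> (\<Sum>p\<in>?Z. \<Sum>q\<in>?Z. (x * iA p + y * iB p) * (x * iA q + y * iB q) * Lq L p q)"
    by (rule psd[OF fI pe])
  also have "\<dots> = x*x * (\<Sum>p\<in>?Z. \<Sum>q\<in>?Z. (iA p * iA q) * Lq L p q)
      + x*y * (\<Sum>p\<in>?Z. \<Sum>q\<in>?Z. (iA p * iB q) * Lq L p q)
      + y*x * (\<Sum>p\<in>?Z. \<Sum>q\<in>?Z. (iB p * iA q) * Lq L p q)
      + y*y * (\<Sum>p\<in>?Z. \<Sum>q\<in>?Z. (iB p * iB q) * Lq L p q)"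
    unfolding e by (simp add: sum.distrib sum_distrib_left)
  also have "\<dots> = x*x * Qs L A A + x*y * Qs L A B + y*x * Qs L B A + y*y * Qs L B B"
    unfolding iA_def iB_def using ind2[OF fZ A A] ind2[OF fZ A B] ind2[OF fZ B A] ind2[OF fZ B B]
    by simp
  also have "\<dots> = x*x * Qs L A A + 2*x*y * Qs L A B + y*y * Qs L B B"
    by (simp add: Qs_sym[of L B A] algebra_simps)
  finally show ?thesis .
qed

lemma Qs_nonneg:
  assumes "finite I" "pseudo_exp4 I L" "A \<subseteq> I \<times> I"
  shows "0 \<le> Qs L A A"
  using expand[OF assms assms(3), of 1 0] by simp

lemma Qs_amgm:
  assumes fI: "finite I" and pe: "pseudo_exp4 I L" and A: "A \<subseteq> I \<times> I" and B: "B \<subseteq> I \<times> I"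
    and lam: "lam > 0"
  shows "2 * \<bar>Qs L A B\<bar> \<le> lam * Qs L A A + Qs L B B / lam"
proof -
  have 1: "0 \<le> lam*lam * Qs L A A + 2*lam*(-1) * Qs L A B + (-1)*(-1) * Qs L B B"
    by (rule expand[OF fI pe A B])
  have 2: "0 \<le> lam*lam * Qs L A A + 2*lam*1 * Qs L A B + 1*1 * Qs L B B"
    by (rule expand[OF fI pe A B])
  have "lam * (2 * \<bar>Qs L A B\<bar>) \<le> lam * (lam * Qs L A A + Qs L B B / lam)"
    using 1 2 lam by (auto simp: abs_if algebra_simps)
  then show ?thesis using lam by simp
qed

lemma basic:
  assumes fI: "finite I" and pe: "pseudo_exp4 I L" and x: "x \<in> I \<times> I" and y: "y \<in> I \<times> I"
  shows "2 * Lq L x y \<le> Lq L x x + Lq L y y"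
proof -
  have "2 * \<bar>Qs L {x} {y}\<bar> \<le> 1 * Qs L {x} {x} + Qs L {y} {y} / 1"
    by (rule Qs_amgm[OF fI pe]) (use x y in auto)
  then show ?thesis unfolding Qs_def by simp
qed

lemma Lsq_nonneg:
  assumes fI: "finite I" and pe: "pseudo_exp4 I L" and a: "a \<in> I" and b: "b \<in> I"
  shows "0 \<le> L {#a, a, b, b#}"
proof -
  have "0 \<le> Qs L {(a,b)} {(a,b)}" by (rule Qs_nonneg[OF fI pe]) (use a b in auto)
  then show ?thesis unfolding Qs_def Lq_def by (simp add: add_mset_commute)
qed

lemma lagrange:
  assumes fI: "finite I" and pe: "pseudo_exp4 I L" and P: "P \<subseteq> I \<times> I"
  shows "Qs L P P \<le> (\<Sum>p\<in>P. \<Sum>q\<in>P. L {#fst p, fst p, snd q, snd q#})"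
proof -
  have fP: "finite P" using P fI by (meson finite_SigmaI finite_subset)
  have b: "2 * Lq L p q \<le> L {#fst p, fst p, snd q, snd q#} + L {#fst q, fst q, snd p, snd p#}"
    if "p \<in> P" "q \<in> P" for p q
  proof -
    have "2 * Lq L (fst p, snd q) (fst q, snd p) \<le> Lq L (fst p, snd q) (fst p, snd q) + Lq L (fst q, snd p) (fst q, snd p)"
      by (rule basic[OF fI pe]) (use that P in auto)
    moreover have "Lq L (fst p, snd q) (fst q, snd p) = Lq L p q" unfolding Lq_def
      by (simp add: add_mset_commute)
    moreover have "Lq L (fst p, snd q) (fst p, snd q) = L {#fst p, fst p, snd q, snd q#}"
      unfolding Lq_def by (simp add: add_mset_commute)
    moreover have "Lq L (fst q, snd p) (fst q, snd p) = L {#fst q, fst q, snd p, snd p#}"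
      unfolding Lq_def by (simp add: add_mset_commute)
    ultimately show ?thesis by simp
  qed
  have "2 * Qs L P P = (\<Sum>p\<in>P. \<Sum>q\<in>P. 2 * Lq L p q)" unfolding Qs_def by (simp add: sum_distrib_left)
  also have "\<dots> \<le> (\<Sum>p\<in>P. \<Sum>q\<in>P. L {#fst p, fst p, snd q, snd q#} + L {#fst q, fst q, snd p, snd p#})"
    by (intro sum_mono) (use b in auto)
  also have "\<dots> = (\<Sum>p\<in>P. \<Sum>q\<in>P. L {#fst p, fst p, snd q, snd q#}) + (\<Sum>p\<in>P. \<Sum>q\<in>P. L {#fst q, fst q, snd p, snd p#})"
    by (simp add: sum.distrib)
  also have "(\<Sum>p\<in>P. \<Sum>q\<in>P. L {#fst q, fst q, snd p, snd p#}) = (\<Sum>p\<in>P. \<Sum>q\<in>P. L {#fst p, fst p, snd q, snd q#})"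
    by (rule sum.swap)
  finally show ?thesis by simp
qed


definition sred :: "(nat \<Rightarrow> nat) \<times> (nat \<Rightarrow> nat) \<Rightarrow> (nat \<Rightarrow> nat) \<times> (nat \<Rightarrow> nat)" where
  "sred p = (\<lambda>r. red1 (fst p r) (snd p r), \<lambda>r. red2 (fst p r) (snd p r))"

definition xcompat :: "(nat \<Rightarrow> nat) \<Rightarrow> nat \<Rightarrow> (nat \<Rightarrow> nat) \<times> (nat \<Rightarrow> nat) \<Rightarrow> (nat \<Rightarrow> nat) \<times> (nat \<Rightarrow> nat) \<Rightarrow> bool" where
  "xcompat \<sigma> R u v \<longleftrightarrow> (\<forall>r<R. xcond \<sigma> (fst u r) (snd u r) (fst v r) (snd v r))"

definition ycompat :: "nat \<Rightarrow> (nat \<Rightarrow> nat) \<times> (nat \<Rightarrow> nat) \<Rightarrow> (nat \<Rightarrow> nat) \<times> (nat \<Rightarrow> nat) \<Rightarrow> bool" where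
  "ycompat R u v \<longleftrightarrow> (\<forall>r<R. ycond (fst u r) (snd u r) (fst v r) (snd v r))"

definition heavy :: "nat \<Rightarrow> (nat \<Rightarrow> nat) \<times> (nat \<Rightarrow> nat) \<Rightarrow> bool" where
  "heavy R u \<longleftrightarrow> (\<exists>r<R. fst u r \<noteq> 0 \<and> snd u r \<noteq> 0)"

lemma mi_lt: "\<alpha> \<in> multi_indices k R l \<Longrightarrow> r < R \<Longrightarrow> \<alpha> r < k"
  unfolding multi_indices_def by auto
lemma mi_zero: "\<alpha> \<in> multi_indices k R l \<Longrightarrow> \<not> r < R \<Longrightarrow> \<alpha> r = 0"
  unfolding multi_indices_def by auto
lemma mi_card: "\<alpha> \<in> multi_indices k R l \<Longrightarrow> card {r. r < R \<and> \<alpha> r \<noteq> 0} \<le> l"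
  unfolding multi_indices_def by auto

lemma mi_finite: "finite (multi_indices k R l)"
proof -
  have "multi_indices k R l \<subseteq> (\<lambda>f r. if r < R then f r else 0) ` ({0..<R} \<rightarrow>\<^sub>E {0..<k})"
  proof
    fix \<alpha> assume a: "\<alpha> \<in> multi_indices k R l"
    have "\<alpha> = (\<lambda>r. if r < R then restrict \<alpha> {0..<R} r else 0)"
      using mi_zero[OF a] by (auto simp: fun_eq_iff)
    moreover have "restrict \<alpha> {0..<R} \<in> {0..<R} \<rightarrow>\<^sub>E {0..<k}" using mi_lt[OF a] by auto
    ultimately show "\<alpha> \<in> (\<lambda>f r. if r < R then f r else 0) ` ({0..<R} \<rightarrow>\<^sub>E {0..<k})" by blast
  qed
  then show ?thesis by (rule finite_subset) (auto intro!: finite_PiE)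
qed

lemma prod_ind: fixes R :: nat shows "(\<Prod>r<R. if P r then 1 else (0::real)) = (if \<forall>r<R. P r then 1 else 0)"
  by (induction R) (auto simp: less_Suc_eq lessThan_Suc)

lemma cart: "(\<Sum>x\<in>A. \<Sum>y\<in>B. g x y) = (\<Sum>p\<in>A \<times> B. g (fst p) (snd p))"
  by (simp add: sum.cartesian_product split_def)

lemma moment_diff:
  assumes sp: "\<sigma> permutes {0..<2^t}" and s0: "\<sigma> 0 = 0"
    and I_def: "I = multi_indices (2^t) R l"
  shows "pE_moment4 R I L (X_space t R) (X_val t \<sigma>) - pE_moment4 R I L (Y_space (2^t) R) Y_val
    = (\<Sum>p\<in>I\<times>I. \<Sum>q\<in>I\<times>I. Lq L p q * ((if xcompat \<sigma> R (sred p) (sred q) then 1 else 0)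
          - (if ycompat R (sred p) (sred q) then 1 else 0)))"
proof -
  have lt: "\<And>\<alpha> r. \<alpha> \<in> I \<Longrightarrow> r < R \<Longrightarrow> \<alpha> r < 2^t" unfolding I_def by (rule mi_lt)
  have X: "pE_moment4 R I L (X_space t R) (X_val t \<sigma>) = (\<Sum>\<alpha>\<in>I. \<Sum>\<beta>\<in>I. \<Sum>\<gamma>\<in>I. \<Sum>\<delta>\<in>I.
     L {#\<alpha>, \<beta>, \<gamma>, \<delta>#} * (if xcompat \<sigma> R (sred (\<alpha>,\<beta>)) (sred (\<gamma>,\<delta>)) then 1 else 0))"
    unfolding pE_moment4_def
    apply (intro sum.cong refl)
    apply (subst X_moment[OF sp])
     apply (simp add: lt)
    apply (simp add: prod_ind xcompat_def sred_def xcond_red[of \<sigma>, OF s0, symmetric])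
    done
  have Y: "pE_moment4 R I L (Y_space (2^t) R) Y_val = (\<Sum>\<alpha>\<in>I. \<Sum>\<beta>\<in>I. \<Sum>\<gamma>\<in>I. \<Sum>\<delta>\<in>I.
     L {#\<alpha>, \<beta>, \<gamma>, \<delta>#} * (if ycompat R (sred (\<alpha>,\<beta>)) (sred (\<gamma>,\<delta>)) then 1 else 0))"
    unfolding pE_moment4_def
    apply (intro sum.cong refl)
    apply (subst Y_moment)
     apply (simp add: lt)
    apply (simp add: prod_ind ycompat_def sred_def ycond_red[symmetric])
    done
  have c4: "(\<Sum>\<alpha>\<in>I. \<Sum>\<beta>\<in>I. \<Sum>\<gamma>\<in>I. \<Sum>\<delta>\<in>I. h \<alpha> \<beta> \<gamma> \<delta>)
     = (\<Sum>p\<in>I\<times>I. \<Sum>q\<in>I\<times>I. h (fst p) (snd p) (fst q) (snd q))" for h :: "_ \<Rightarrow> _ \<Rightarrow> _ \<Rightarrow> _ \<Rightarrow> real"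
  proof -
    have "(\<Sum>p\<in>I\<times>I. \<Sum>q\<in>I\<times>I. h (fst p) (snd p) (fst q) (snd q))
      = (\<Sum>\<alpha>\<in>I. \<Sum>\<beta>\<in>I. \<Sum>q\<in>I\<times>I. h \<alpha> \<beta> (fst q) (snd q))"
      by (rule cart[symmetric])
    also have "\<dots> = (\<Sum>\<alpha>\<in>I. \<Sum>\<beta>\<in>I. \<Sum>\<gamma>\<in>I. \<Sum>\<delta>\<in>I. h \<alpha> \<beta> \<gamma> \<delta>)"
      by (intro sum.cong refl) (rule cart[symmetric])
    finally show ?thesis by simp
  qed
  show ?thesis
    unfolding X Y Lq_def sum_subtractf[symmetric] c4
    by (intro sum.cong refl) (simp add: algebra_simps)
qed


lemma group2:
  fixes F :: "'a \<Rightarrow> 'a \<Rightarrow> real"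
  assumes fZ: "finite Z"
  shows "(\<Sum>p\<in>Z. \<Sum>q\<in>Z. F p q * C (s p) (s q))
       = (\<Sum>u\<in>s`Z. \<Sum>v\<in>s`Z. C u v * (\<Sum>p\<in>{p\<in>Z. s p = u}. \<Sum>q\<in>{q\<in>Z. s q = v}. F p q))"
proof -
  have fS: "finite (s`Z)" using fZ by simp
  have "(\<Sum>u\<in>s`Z. \<Sum>v\<in>s`Z. C u v * (\<Sum>p\<in>{p\<in>Z. s p = u}. \<Sum>q\<in>{q\<in>Z. s q = v}. F p q))
     = (\<Sum>u\<in>s`Z. \<Sum>p\<in>{p\<in>Z. s p = u}. \<Sum>v\<in>s`Z. \<Sum>q\<in>{q\<in>Z. s q = v}. F p q * C (s p) (s q))"
  proof (intro sum.cong refl)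
    fix u assume "u \<in> s`Z"
    have "(\<Sum>v\<in>s`Z. C u v * (\<Sum>p\<in>{p\<in>Z. s p = u}. \<Sum>q\<in>{q\<in>Z. s q = v}. F p q))
      = (\<Sum>v\<in>s`Z. \<Sum>p\<in>{p\<in>Z. s p = u}. \<Sum>q\<in>{q\<in>Z. s q = v}. F p q * C (s p) (s q))"
      by (intro sum.cong refl) (auto simp: sum_distrib_left mult.commute intro!: sum.cong)
    also have "\<dots> = (\<Sum>p\<in>{p\<in>Z. s p = u}. \<Sum>v\<in>s`Z. \<Sum>q\<in>{q\<in>Z. s q = v}. F p q * C (s p) (s q))"
      by (rule sum.swap)
    finally show "(\<Sum>v\<in>s`Z. C u v * (\<Sum>p\<in>{p\<in>Z. s p = u}. \<Sum>q\<in>{q\<in>Z. s q = v}. F p q))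
      = (\<Sum>p\<in>{p\<in>Z. s p = u}. \<Sum>v\<in>s`Z. \<Sum>q\<in>{q\<in>Z. s q = v}. F p q * C (s p) (s q))" .
  qed
  also have "\<dots> = (\<Sum>u\<in>s`Z. \<Sum>p\<in>{p\<in>Z. s p = u}. \<Sum>q\<in>Z. F p q * C (s p) (s q))"
    by (intro sum.cong refl sum.group fZ fS) auto
  also have "\<dots> = (\<Sum>p\<in>Z. \<Sum>q\<in>Z. F p q * C (s p) (s q))"
    by (intro sum.group fZ fS) auto
  finally show ?thesis by simp
qed

lemma ind_card: "finite S \<Longrightarrow> (\<Sum>v\<in>S. if P v then 1 else 0) = real (card {v\<in>S. P v})"
  by (simp add: sum.inter_filter[symmetric])

lemma abstract_bound:
  fixes Q C :: "'u \<Rightarrow> 'u \<Rightarrow> real"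
  assumes fS: "finite S"
    and Qnn: "\<And>u. u \<in> S \<Longrightarrow> 0 \<le> Q u u"
    and Qsym: "\<And>u v. u \<in> S \<Longrightarrow> v \<in> S \<Longrightarrow> Q u v = Q v u"
    and lam: "lam > 0"
    and amgm: "\<And>u v. u \<in> S \<Longrightarrow> v \<in> S \<Longrightarrow> 2 * \<bar>Q u v\<bar> \<le> lam * Q u u + Q v v / lam"
    and Cz: "\<And>u v. u \<in> S \<Longrightarrow> v \<in> S \<Longrightarrow> C u v \<noteq> 0 \<Longrightarrow> cp u v \<and> (h u \<or> h v)"
    and C1: "\<And>u v. \<bar>C u v\<bar> \<le> 1"
    and N1: "\<And>u. u \<in> S \<Longrightarrow> real (card {v\<in>S. cp u v}) \<le> N"
    and N2: "\<And>v. v \<in> S \<Longrightarrow> real (card {u\<in>S. cp u v}) \<le> N"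
  shows "\<bar>\<Sum>u\<in>S. \<Sum>v\<in>S. C u v * Q u v\<bar> \<le> N * (lam * (\<Sum>u\<in>S. if h u then Q u u else 0) + (\<Sum>u\<in>S. Q u u) / lam)"
proof -
  define W where "W u = lam * (if h u then Q u u else 0) + Q u u / lam" for u
  have Wnn: "u \<in> S \<Longrightarrow> 0 \<le> W u" for u unfolding W_def using Qnn[of u] lam by auto
  have pt: "\<bar>C u v * Q u v\<bar> \<le> (if cp u v then 1 else 0) * W u / 2 + (if cp u v then 1 else 0) * W v / 2"
    if u: "u \<in> S" and v: "v \<in> S" for u v
  proof (cases "C u v = 0")
    case True
    then show ?thesis using Wnn[OF u] Wnn[OF v] by auto
  next
    case False
    from Cz[OF u v False] have cp: "cp u v" and hh: "h u \<or> h v" by auto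
    have a: "0 \<le> Q u u / lam" "0 \<le> Q v v / lam" "0 \<le> lam * Q u u" "0 \<le> lam * Q v v"
      using Qnn[OF u] Qnn[OF v] lam by auto
    have "\<bar>C u v * Q u v\<bar> \<le> \<bar>Q u v\<bar>"
      using C1[of u v] by (simp add: abs_mult mult_left_le_one_le)
    moreover have "2 * \<bar>Q u v\<bar> \<le> W u + W v"
    proof (cases "h u")
      case True
      have "2 * \<bar>Q u v\<bar> \<le> lam * Q u u + Q v v / lam" by (rule amgm[OF u v])
      then show ?thesis unfolding W_def using True a by (cases "h v") auto
    next
      case False
      then have hv: "h v" using hh by auto
      have "2 * \<bar>Q v u\<bar> \<le> lam * Q v v + Q u u / lam" by (rule amgm[OF v u])
      then show ?thesis unfolding W_def using False hv a Qsym[OF u v] by auto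
    qed
    ultimately show ?thesis using cp by simp
  qed
  have s1: "(\<Sum>u\<in>S. \<Sum>v\<in>S. (if cp u v then 1 else 0) * W u) \<le> N * (\<Sum>u\<in>S. W u)"
  proof -
    have "(\<Sum>u\<in>S. \<Sum>v\<in>S. (if cp u v then 1 else 0) * W u) = (\<Sum>u\<in>S. real (card {v\<in>S. cp u v}) * W u)"
      by (intro sum.cong refl) (simp add: sum_distrib_right[symmetric] ind_card[OF fS])
    also have "\<dots> \<le> (\<Sum>u\<in>S. N * W u)"
      by (intro sum_mono mult_right_mono N1 Wnn)
    finally show ?thesis by (simp add: sum_distrib_left)
  qed
  have s2: "(\<Sum>u\<in>S. \<Sum>v\<in>S. (if cp u v then 1 else 0) * W v) \<le> N * (\<Sum>u\<in>S. W u)"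
  proof -
    have "(\<Sum>u\<in>S. \<Sum>v\<in>S. (if cp u v then 1 else 0) * W v) = (\<Sum>v\<in>S. \<Sum>u\<in>S. (if cp u v then 1 else 0) * W v)"
      by (rule sum.swap)
    also have "\<dots> = (\<Sum>v\<in>S. real (card {u\<in>S. cp u v}) * W v)"
      by (intro sum.cong refl) (simp add: sum_distrib_right[symmetric] ind_card[OF fS])
    also have "\<dots> \<le> (\<Sum>v\<in>S. N * W v)"
      by (intro sum_mono mult_right_mono N2 Wnn)
    finally show ?thesis by (simp add: sum_distrib_left)
  qed
  have "\<bar>\<Sum>u\<in>S. \<Sum>v\<in>S. C u v * Q u v\<bar> \<le> (\<Sum>u\<in>S. \<Sum>v\<in>S. \<bar>C u v * Q u v\<bar>)"
    by (rule order_trans[OF sum_abs]) (intro sum_mono sum_abs)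
  also have "\<dots> \<le> (\<Sum>u\<in>S. \<Sum>v\<in>S. (if cp u v then 1 else 0) * W u / 2 + (if cp u v then 1 else 0) * W v / 2)"
    by (intro sum_mono pt)
  also have "\<dots> = ((\<Sum>u\<in>S. \<Sum>v\<in>S. (if cp u v then 1 else 0) * W u) + (\<Sum>u\<in>S. \<Sum>v\<in>S. (if cp u v then 1 else 0) * W v)) / 2"
    by (simp add: sum.distrib sum_divide_distrib[symmetric])
  also have "\<dots> \<le> N * (\<Sum>u\<in>S. W u)" using s1 s2 by simp
  also have "(\<Sum>u\<in>S. W u) = lam * (\<Sum>u\<in>S. if h u then Q u u else 0) + (\<Sum>u\<in>S. Q u u) / lam"
    unfolding W_def by (simp add: sum.distrib sum_distrib_left sum_divide_distrib)
  finally show ?thesis .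
qed


lemma sred_r: "sred p = sred q \<Longrightarrow> red1 (fst p r) (snd p r) = red1 (fst q r) (snd q r) \<and> red2 (fst p r) (snd p r) = red2 (fst q r) (snd q r)"
  unfolding sred_def by (simp add: fun_eq_iff)

lemma red_b: "red1 a b = red1 c d \<Longrightarrow> red2 a b = red2 c d \<Longrightarrow> a \<noteq> b \<Longrightarrow> c = a \<and> d = b"
  unfolding red1_def red2_def by (auto split: if_splits)

lemma red_c: "red1 a b = red1 c d \<Longrightarrow> red2 a b = red2 c d \<Longrightarrow> a = b \<Longrightarrow> c = d"
  unfolding red1_def red2_def by (auto split: if_splits)

lemma sred_b: "sred p = sred q \<Longrightarrow> fst p r \<noteq> snd p r \<Longrightarrow> fst q r = fst p r \<and> snd q r = snd p r"
proof -
  assume s: "sred p = sred q" and d: "fst p r \<noteq> snd p r"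
  from sred_r[OF s, of r] have "red1 (fst p r) (snd p r) = red1 (fst q r) (snd q r)"
    "red2 (fst p r) (snd p r) = red2 (fst q r) (snd q r)" by auto
  from red_b[OF this d] show ?thesis .
qed

lemma sred_c: "sred p = sred q \<Longrightarrow> fst p r = snd p r \<Longrightarrow> fst q r = snd q r"
proof -
  assume s: "sred p = sred q" and d: "fst p r = snd p r"
  from sred_r[OF s, of r] have "red1 (fst p r) (snd p r) = red1 (fst q r) (snd q r)"
    "red2 (fst p r) (snd p r) = red2 (fst q r) (snd q r)" by auto
  from red_c[OF this d] show ?thesis .
qed

lemma diff_card:
  assumes a: "a \<in> multi_indices k R l" and b: "b \<in> multi_indices k R l"
  shows "finite {r. a r \<noteq> b r}" "card {r. a r \<noteq> b r} \<le> 2 * l"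
proof -
  have sub: "{r. a r \<noteq> b r} \<subseteq> {r. r < R \<and> a r \<noteq> 0} \<union> {r. r < R \<and> b r \<noteq> 0}"
  proof
    fix r assume "r \<in> {r. a r \<noteq> b r}"
    then have ne: "a r \<noteq> b r" by simp
    have "r < R" using ne mi_zero[OF a, of r] mi_zero[OF b, of r] by fastforce
    then show "r \<in> {r. r < R \<and> a r \<noteq> 0} \<union> {r. r < R \<and> b r \<noteq> 0}" using ne by (cases "a r = 0") auto
  qed
  have f: "finite ({r. r < R \<and> a r \<noteq> 0} \<union> {r. r < R \<and> b r \<noteq> 0})" by auto
  show "finite {r. a r \<noteq> b r}" using finite_subset[OF sub f] .
  have "card {r. a r \<noteq> b r} \<le> card ({r. r < R \<and> a r \<noteq> 0} \<union> {r. r < R \<and> b r \<noteq> 0})"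
    by (rule card_mono[OF f sub])
  also have "\<dots> \<le> card {r. r < R \<and> a r \<noteq> 0} + card {r. r < R \<and> b r \<noteq> 0}" by (rule card_Un_le)
  also have "\<dots> \<le> 2 * l" using mi_card[OF a] mi_card[OF b] by simp
  finally show "card {r. a r \<noteq> b r} \<le> 2 * l" .
qed

lemma count_bound:
  fixes g :: "(nat \<Rightarrow> nat) \<Rightarrow> (nat \<Rightarrow> nat) \<Rightarrow> real"
  assumes I: "I = multi_indices k R l" and JI: "J \<subseteq> I"
    and gnn: "\<And>a b. a \<in> J \<Longrightarrow> b \<in> J \<Longrightarrow> 0 \<le> g a b"
  shows "(\<Sum>p\<in>I\<times>I. \<Sum>q\<in>{q\<in>I\<times>I. sred q = sred p}. if fst p \<in> J \<and> snd q \<in> J then g (fst p) (snd q) else 0)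
     \<le> 4^l * (\<Sum>a\<in>J. \<Sum>b\<in>J. g a b)"
proof -
  have fI: "finite I" unfolding I by (rule mi_finite)
  have fJ: "finite J" using finite_subset[OF JI fI] .
  define Sg where "Sg = Sigma (I\<times>I) (\<lambda>p. {q\<in>I\<times>I. sred q = sred p})"
  define W where "W = {x\<in>Sg. fst (fst x) \<in> J \<and> snd (snd x) \<in> J}"
  define \<iota> where "\<iota> x = ((fst (fst x), snd (snd x)), {r. fst (fst x) r \<noteq> snd (fst x) r})"
    for x :: "((nat \<Rightarrow> nat) \<times> (nat \<Rightarrow> nat)) \<times> ((nat \<Rightarrow> nat) \<times> (nat \<Rightarrow> nat))"
  define T where "T = Sigma (J\<times>J) (\<lambda>ab. Pow {r. fst ab r \<noteq> snd ab r})"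
  have fSg: "finite Sg" unfolding Sg_def using fI by (intro finite_SigmaI) auto
  have fW: "finite W" unfolding W_def using fSg by simp
  have Dfin: "finite {r. a r \<noteq> b r}" if "a \<in> J" "b \<in> J" for a b
    using that JI I by (intro diff_card(1)) auto
  have fT: "finite T" unfolding T_def using fJ Dfin by (intro finite_SigmaI) auto
  have "(\<Sum>p\<in>I\<times>I. \<Sum>q\<in>{q\<in>I\<times>I. sred q = sred p}. if fst p \<in> J \<and> snd q \<in> J then g (fst p) (snd q) else 0)
      = (\<Sum>x\<in>Sg. if fst (fst x) \<in> J \<and> snd (snd x) \<in> J then g (fst (fst x)) (snd (snd x)) else 0)"
    unfolding Sg_def by (subst sum.Sigma) (simp_all add: split_def fI)
  also have "\<dots> = (\<Sum>x\<in>W. g (fst (fst x)) (snd (snd x)))"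
    unfolding W_def using fSg by (simp add: sum.inter_filter)
  also have "\<dots> = (\<Sum>y\<in>\<iota>`W. g (fst (fst y)) (snd (fst y)))"
  proof -
    have "inj_on \<iota> W"
    proof (rule inj_onI)
      fix x y assume x: "x \<in> W" and y: "y \<in> W" and e: "\<iota> x = \<iota> y"
      obtain p q where xpq: "x = (p, q)" by (cases x)
      obtain p' q' where ypq: "y = (p', q')" by (cases y)
      have "(p,q) \<in> Sg" "(p',q') \<in> Sg" using x y xpq ypq unfolding W_def by simp_all
      then have sx: "sred q = sred p" and sy: "sred q' = sred p'" unfolding Sg_def by simp_all
      have e0: "(fst p = fst p' \<and> snd q = snd q') \<and> {r. fst p r \<noteq> snd p r} = {r. fst p' r \<noteq> snd p' r}"
        by (rule e[unfolded \<iota>_def xpq ypq fst_conv snd_conv prod.inject])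
      note e1 = conjunct1[OF conjunct1[OF e0]] conjunct2[OF conjunct1[OF e0]]
      note e2 = conjunct2[OF e0]
      have "snd p = snd p'"
      proof
        fix r show "snd p r = snd p' r"
        proof (cases "fst p r = snd p r")
          case True
          then have "fst p' r = snd p' r" using e2 by (metis (mono_tags) mem_Collect_eq)
          then show ?thesis using True e1 by simp
        next
          case False
          then have F': "fst p' r \<noteq> snd p' r" using e2 by (metis (mono_tags) mem_Collect_eq)
          have "snd q r = snd p r" using sred_b[OF sx[symmetric] False] by simp
          moreover have "snd q' r = snd p' r" using sred_b[OF sy[symmetric] F'] by simp
          ultimately show ?thesis using e1 by simp
        qed
      qed
      moreover have "fst q = fst q'"
      proof
        fix r show "fst q r = fst q' r"
        proof (cases "fst p r = snd p r")
          case True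
          then have T': "fst p' r = snd p' r" using e2 by (metis (mono_tags) mem_Collect_eq)
          have "fst q r = snd q r" by (rule sred_c[OF sx[symmetric] True])
          moreover have "fst q' r = snd q' r" by (rule sred_c[OF sy[symmetric] T'])
          ultimately show ?thesis using e1 by simp
        next
          case False
          then have F': "fst p' r \<noteq> snd p' r" using e2 by (metis (mono_tags) mem_Collect_eq)
          have "fst q r = fst p r" using sred_b[OF sx[symmetric] False] by simp
          moreover have "fst q' r = fst p' r" using sred_b[OF sy[symmetric] F'] by simp
          ultimately show ?thesis using e1 by simp
        qed
      qed
      ultimately show "x = y" unfolding xpq ypq using e1 by (simp add: prod_eq_iff)
    qed
    from sum.reindex[OF this, of "\<lambda>y. g (fst (fst y)) (snd (fst y))"] show ?thesis
      by (simp add: \<iota>_def)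
  qed
  also have "\<dots> \<le> (\<Sum>y\<in>T. g (fst (fst y)) (snd (fst y)))"
  proof (rule sum_mono2[OF fT])
    show "\<iota> ` W \<subseteq> T"
    proof
      fix y assume "y \<in> \<iota> ` W"
      then obtain p q where pq: "(p, q) \<in> W" and y: "y = \<iota> (p, q)" by auto
      have pq': "(p,q) \<in> Sg" and J1: "fst p \<in> J" and J2: "snd q \<in> J"
        using pq unfolding W_def by simp_all
      have s: "sred q = sred p" using pq' unfolding Sg_def by simp
      have "{r. fst p r \<noteq> snd p r} \<subseteq> {r. fst p r \<noteq> snd q r}"
      proof
        fix r assume "r \<in> {r. fst p r \<noteq> snd p r}"
        then have ne: "fst p r \<noteq> snd p r" by simp
        then have "snd q r = snd p r" using sred_b[OF s[symmetric] ne] by simp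
        then show "r \<in> {r. fst p r \<noteq> snd q r}" using ne by simp
      qed
      then show "y \<in> T" using J1 J2 unfolding y \<iota>_def T_def by simp
    qed
    show "0 \<le> g (fst (fst b)) (snd (fst b))" if "b \<in> T - \<iota> ` W" for b
    proof -
      have "fst b \<in> J \<times> J" using that unfolding T_def by (auto simp: mem_Times_iff)
      then show ?thesis using gnn by (simp add: mem_Times_iff)
    qed
  qed
  also have "\<dots> = (\<Sum>ab\<in>J\<times>J. \<Sum>D\<in>Pow {r. fst ab r \<noteq> snd ab r}. g (fst ab) (snd ab))"
    unfolding T_def by (subst sum.Sigma) (simp_all add: split_def fJ Dfin)
  also have "\<dots> = (\<Sum>ab\<in>J\<times>J. 2 ^ card {r. fst ab r \<noteq> snd ab r} * g (fst ab) (snd ab))"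
    using Dfin by (intro sum.cong refl) (auto simp: card_Pow)
  also have "\<dots> \<le> (\<Sum>ab\<in>J\<times>J. 4^l * g (fst ab) (snd ab))"
  proof (intro sum_mono mult_right_mono)
    fix ab assume ab: "ab \<in> J \<times> J"
    have m: "fst ab \<in> multi_indices k R l" "snd ab \<in> multi_indices k R l" using ab JI I by (auto simp: mem_Times_iff)
    have "card {r. fst ab r \<noteq> snd ab r} \<le> 2 * l" by (rule diff_card(2)[OF m])
    then have "(2::real) ^ card {r. fst ab r \<noteq> snd ab r} \<le> 2 ^ (2 * l)" by (intro power_increasing) auto
    also have "\<dots> = 4 ^ l" by (simp add: power_mult)
    finally show "(2::real) ^ card {r. fst ab r \<noteq> snd ab r} \<le> 4 ^ l" .
    show "0 \<le> g (fst ab) (snd ab)" using ab gnn by auto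
  qed
  also have "\<dots> = 4^l * (\<Sum>a\<in>J. \<Sum>b\<in>J. g a b)"
    by (simp only: sum_distrib_left[symmetric] cart[symmetric])
  finally show ?thesis .
qed


lemma red_eq: "red1 a b = red2 a b \<Longrightarrow> red1 a b = 0 \<and> red2 a b = 0"
  unfolding red1_def red2_def by (auto split: if_splits)

lemma xcompat_sym: "xcompat \<sigma> R u v = xcompat \<sigma> R v u"
  unfolding xcompat_def xcond_alt by auto

lemma sred_lt:
  assumes "q \<in> multi_indices k R l \<times> multi_indices k R l"
  shows "fst (sred q) r < k \<or> (fst (sred q) r = 0)"
  using assms mi_lt[of "fst q" k R l r] mi_zero[of "fst q" k R l r] unfolding sred_def red1_def
  by (cases "r < R") (auto simp: mem_Times_iff)

lemma sred_zero:
  assumes "q \<in> multi_indices k R l \<times> multi_indices k R l" "\<not> r < R"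
  shows "fst (sred q) r = 0 \<and> snd (sred q) r = 0"
  using assms mi_zero[of "fst q" k R l r] mi_zero[of "snd q" k R l r]
  unfolding sred_def red1_def red2_def by (auto simp: mem_Times_iff)

lemma partner_count:
  assumes sp: "\<sigma> permutes {0..<2^t}" and s0: "\<sigma> 0 = 0"
    and I: "I = multi_indices (2^t) R l" and u: "u \<in> sred ` (I \<times> I)"
  shows "card {v \<in> sred ` (I \<times> I). xcompat \<sigma> R u v} \<le> (2^t)^(2*l)"
proof -
  obtain p where p: "p \<in> I \<times> I" and up: "u = sred p" using u by auto
  define Du where "Du = {r. fst p r \<noteq> snd p r}"
  define V where "V = {v \<in> sred ` (I \<times> I). xcompat \<sigma> R u v}"
  have pm: "fst p \<in> multi_indices (2^t) R l" "snd p \<in> multi_indices (2^t) R l" using p I by auto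
  have fDu: "finite Du" unfolding Du_def by (rule diff_card(1)[OF pm])
  have cDu: "card Du \<le> 2 * l" unfolding Du_def by (rule diff_card(2)[OF pm])
  have uDu: "r \<in> Du \<longleftrightarrow> fst u r \<noteq> snd u r" for r
    unfolding Du_def up sred_def red1_def red2_def by auto
  have inj: "inj_on (\<lambda>v. restrict (fst v) Du) V"
  proof (rule inj_onI)
    fix v v' assume v: "v \<in> V" and v': "v' \<in> V" and e: "restrict (fst v) Du = restrict (fst v') Du"
    obtain q where q: "q \<in> I \<times> I" and vq: "v = sred q" using v unfolding V_def by auto
    obtain q' where q': "q' \<in> I \<times> I" and vq': "v' = sred q'" using v' unfolding V_def by auto
    have cv: "xcompat \<sigma> R u v" and cv': "xcompat \<sigma> R u v'" using v v' unfolding V_def by auto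
    have qm: "q \<in> multi_indices (2^t) R l \<times> multi_indices (2^t) R l" using q I by simp
    have qm': "q' \<in> multi_indices (2^t) R l \<times> multi_indices (2^t) R l" using q' I by simp
    have "fst v r = fst v' r \<and> snd v r = snd v' r" for r
    proof (cases "r < R")
      case False
      then show ?thesis using sred_zero[OF qm False] sred_zero[OF qm' False] vq vq' by simp
    next
      case rR: True
      have x: "xcond \<sigma> (fst u r) (snd u r) (fst v r) (snd v r)" using cv rR unfolding xcompat_def by auto
      have x': "xcond \<sigma> (fst u r) (snd u r) (fst v' r) (snd v' r)" using cv' rR unfolding xcompat_def by auto
      show ?thesis
      proof (cases "r \<in> Du")
        case True
        have "restrict (fst v) Du r = restrict (fst v') Du r" by (rule fun_cong[OF e])
        then have f: "fst v r = fst v' r" using True by simp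
        have "snd v r = snd v' r" by (rule xcond_det[OF sp x x'[folded f]])
        then show ?thesis using f by simp
      next
        case False
        then have "fst u r = snd u r" using uDu by auto
        then have re: "red1 (fst p r) (snd p r) = red2 (fst p r) (snd p r)" unfolding up sred_def by simp
        have u0: "fst u r = 0" "snd u r = 0" using red_eq[OF re] unfolding up sred_def by simp_all
        have "fst v r = snd v r" using xcond_00[OF sp s0] x u0 by simp
        then have "fst v r = 0 \<and> snd v r = 0" using red_eq unfolding vq sred_def by simp
        moreover have "fst v' r = snd v' r" using xcond_00[OF sp s0] x' u0 by simp
        then have "fst v' r = 0 \<and> snd v' r = 0" using red_eq unfolding vq' sred_def by simp
        ultimately show ?thesis by simp
      qed
    qed
    then show "v = v'" by (simp add: prod_eq_iff fun_eq_iff)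
  qed
  have img: "(\<lambda>v. restrict (fst v) Du) ` V \<subseteq> Du \<rightarrow>\<^sub>E {0..<2^t}"
  proof
    fix w assume "w \<in> (\<lambda>v. restrict (fst v) Du) ` V"
    then obtain v where v: "v \<in> V" and w: "w = restrict (fst v) Du" by auto
    obtain q where q: "q \<in> I \<times> I" and vq: "v = sred q" using v unfolding V_def by auto
    have qm: "q \<in> multi_indices (2^t) R l \<times> multi_indices (2^t) R l" using q I by simp
    have "fst v r < 2^t" for r using sred_lt[OF qm, of r] vq by auto
    then show "w \<in> Du \<rightarrow>\<^sub>E {0..<2^t}" unfolding w by auto
  qed
  have "card V = card ((\<lambda>v. restrict (fst v) Du) ` V)" using inj by (simp add: card_image)
  also have "\<dots> \<le> card (Du \<rightarrow>\<^sub>E {0..<(2::nat)^t})" by (rule card_mono[OF _ img]) (simp add: fDu finite_PiE)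
  also have "\<dots> = (2^t)^card Du" using fDu by (simp add: card_PiE)
  also have "\<dots> \<le> (2^t)^(2*l)" using cDu by (intro power_increasing) auto
  finally show ?thesis unfolding V_def .
qed


lemma if_sum: "(if c then sum f A else 0) = sum (\<lambda>x. if c then f x else (0::real)) A"
  by (cases c) simp_all

lemma class_bound:
  fixes L :: "(nat \<Rightarrow> nat) multiset \<Rightarrow> real"
  assumes fI: "finite I" and pe: "pseudo_exp4 I L"
  shows "(\<Sum>u\<in>sred`(I\<times>I). if \<Phi> u then Qs L {p\<in>I\<times>I. sred p = u} {p\<in>I\<times>I. sred p = u} else 0)
    \<le> (\<Sum>p\<in>I\<times>I. \<Sum>q\<in>{q\<in>I\<times>I. sred q = sred p}. if \<Phi> (sred p) then L {#fst p, fst p, snd q, snd q#} else 0)"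
proof -
  let ?Z = "I \<times> I"
  let ?P = "\<lambda>u. {p\<in>?Z. sred p = u}"
  have fZ: "finite ?Z" using fI by simp
  have "(\<Sum>u\<in>sred`?Z. if \<Phi> u then Qs L (?P u) (?P u) else 0)
     \<le> (\<Sum>u\<in>sred`?Z. if \<Phi> u then (\<Sum>p\<in>?P u. \<Sum>q\<in>?P u. L {#fst p, fst p, snd q, snd q#}) else 0)"
    by (intro sum_mono) (auto intro!: lagrange[OF fI pe])
  also have "\<dots> = (\<Sum>u\<in>sred`?Z. \<Sum>p\<in>?P u. if \<Phi> (sred p) then (\<Sum>q\<in>?P (sred p). L {#fst p, fst p, snd q, snd q#}) else 0)"
    unfolding if_sum by (intro sum.cong refl) auto
  also have "\<dots> = (\<Sum>p\<in>?Z. if \<Phi> (sred p) then (\<Sum>q\<in>?P (sred p). L {#fst p, fst p, snd q, snd q#}) else 0)"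
    by (rule sum.group[OF fZ finite_imageI[OF fZ]]) auto
  also have "\<dots> = (\<Sum>p\<in>?Z. \<Sum>q\<in>{q\<in>?Z. sred q = sred p}. if \<Phi> (sred p) then L {#fst p, fst p, snd q, snd q#} else 0)"
    unfolding if_sum by simp
  finally show ?thesis .
qed

definition hr :: "nat \<Rightarrow> (nat \<Rightarrow> nat) \<times> (nat \<Rightarrow> nat) \<Rightarrow> bool" where
  "hr r u \<longleftrightarrow> fst u r \<noteq> 0 \<and> snd u r \<noteq> 0"

lemma main_bound:
  fixes L :: "(nat \<Rightarrow> nat) multiset \<Rightarrow> real"
  assumes sp: "\<sigma> permutes {0..<2^t}" and s0: "\<sigma> 0 = 0"
    and I: "I = multi_indices (2^t) R l" and pe: "pseudo_exp4 I L" and nm: "pE_norm4 I L \<le> 1"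
    and lam: "lam > 0"
  shows "\<bar>pE_moment4 R I L (X_space t R) (X_val t \<sigma>) - pE_moment4 R I L (Y_space (2^t) R) Y_val\<bar>
     \<le> real ((2^t)^(2*l)) * (lam * (4^l * pE_tau R I L) + 4^l / lam)"
proof -
  let ?Z = "I \<times> I"
  let ?S = "sred ` ?Z"
  let ?P = "\<lambda>u. {p\<in>?Z. sred p = u}"
  define Q where "Q u v = Qs L (?P u) (?P v)" for u v
  define C where "C u v = (if xcompat \<sigma> R u v then 1 else 0) - (if ycompat R u v then 1 else (0::real))" for u v
  define N where "N = real ((2::nat)^t)^(2*l)"
  have fI: "finite I" unfolding I by (rule mi_finite)
  have fZ: "finite ?Z" using fI by simp
  have fS: "finite ?S" using fZ by simp
  have PZ: "\<And>u. ?P u \<subseteq> ?Z" by auto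
  have D: "pE_moment4 R I L (X_space t R) (X_val t \<sigma>) - pE_moment4 R I L (Y_space (2^t) R) Y_val
      = (\<Sum>u\<in>?S. \<Sum>v\<in>?S. C u v * Q u v)"
    unfolding moment_diff[OF sp s0 I] Q_def C_def Qs_def
    using group2[OF fZ, where F = "Lq L" and s = sred and C = "\<lambda>u v. (if xcompat \<sigma> R u v then 1 else 0) - (if ycompat R u v then 1 else (0::real))"]
    by simp
  have Lsq: "0 \<le> L {#a, a, b, b#}" if "a \<in> I" "b \<in> I" for a b
    by (rule Lsq_nonneg[OF fI pe that])
  have Nnn: "0 \<le> N" unfolding N_def by simp
  have bound: "\<bar>\<Sum>u\<in>?S. \<Sum>v\<in>?S. C u v * Q u v\<bar> \<le> N * (lam * (\<Sum>u\<in>?S. if heavy R u then Q u u else 0) + (\<Sum>u\<in>?S. Q u u) / lam)"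
  proof (rule abstract_bound[OF fS _ _ lam, where cp = "xcompat \<sigma> R"])
    show "\<And>u. u \<in> ?S \<Longrightarrow> 0 \<le> Q u u" unfolding Q_def by (rule Qs_nonneg[OF fI pe PZ])
    show "\<And>u v. u \<in> ?S \<Longrightarrow> v \<in> ?S \<Longrightarrow> Q u v = Q v u" unfolding Q_def by (rule Qs_sym)
    show "\<And>u v. u \<in> ?S \<Longrightarrow> v \<in> ?S \<Longrightarrow> 2 * \<bar>Q u v\<bar> \<le> lam * Q u u + Q v v / lam"
      unfolding Q_def by (rule Qs_amgm[OF fI pe PZ PZ lam])
    show "\<And>u v. \<bar>C u v\<bar> \<le> 1" unfolding C_def by auto
    show "xcompat \<sigma> R u v \<and> (heavy R u \<or> heavy R v)" if "u \<in> ?S" "v \<in> ?S" "C u v \<noteq> 0" for u v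
    proof -
      have yx: "ycompat R u v \<Longrightarrow> xcompat \<sigma> R u v" unfolding ycompat_def xcompat_def using ycond_xcond by blast
      have x: "xcompat \<sigma> R u v" and ny: "\<not> ycompat R u v" using that(3) yx unfolding C_def by (auto split: if_splits)
      obtain r where r: "r < R" "\<not> ycond (fst u r) (snd u r) (fst v r) (snd v r)" using ny unfolding ycompat_def by auto
      have "xcond \<sigma> (fst u r) (snd u r) (fst v r) (snd v r)" using x r unfolding xcompat_def by auto
      from heavy_of[OF sp s0 this r(2)] show ?thesis using x r(1) unfolding heavy_def by auto
    qed
    show "real (card {v \<in> ?S. xcompat \<sigma> R u v}) \<le> N" if "u \<in> ?S" for u
      using partner_count[OF sp s0 I that] unfolding N_def by (simp flip: of_nat_power)
    show "real (card {u \<in> ?S. xcompat \<sigma> R u v}) \<le> N" if "v \<in> ?S" for v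
      using partner_count[OF sp s0 I that] unfolding N_def xcompat_sym[of \<sigma> R _ v] by (simp flip: of_nat_power)
  qed
  have B: "(\<Sum>u\<in>?S. Q u u) \<le> 4^l"
  proof -
    have "(\<Sum>u\<in>?S. Q u u) = (\<Sum>u\<in>?S. if True then Q u u else 0)" by simp
    also have "\<dots> \<le> (\<Sum>p\<in>?Z. \<Sum>q\<in>{q\<in>?Z. sred q = sred p}. if True then L {#fst p, fst p, snd q, snd q#} else 0)"
      unfolding Q_def by (rule class_bound[OF fI pe])
    also have "\<dots> = (\<Sum>p\<in>?Z. \<Sum>q\<in>{q\<in>?Z. sred q = sred p}. if fst p \<in> I \<and> snd q \<in> I then L {#fst p, fst p, snd q, snd q#} else 0)"
      by (intro sum.cong refl) (auto simp: mem_Times_iff)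
    also have "\<dots> \<le> 4^l * (\<Sum>a\<in>I. \<Sum>b\<in>I. L {#a, a, b, b#})"
      by (rule count_bound[OF I order_refl]) (rule Lsq)
    also have "\<dots> \<le> 4^l" using nm unfolding pE_norm4_def by simp
    finally show ?thesis .
  qed
  have A: "(\<Sum>u\<in>?S. if heavy R u then Q u u else 0) \<le> 4^l * pE_tau R I L"
  proof -
    have Qnn: "\<And>u. 0 \<le> Q u u" unfolding Q_def by (rule Qs_nonneg[OF fI pe PZ])
    have "(\<Sum>u\<in>?S. if heavy R u then Q u u else 0) \<le> (\<Sum>u\<in>?S. \<Sum>r<R. if hr r u then Q u u else 0)"
    proof (intro sum_mono)
      fix u
      show "(if heavy R u then Q u u else 0) \<le> (\<Sum>r<R. if hr r u then Q u u else 0)"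
      proof (cases "heavy R u")
        case True
        then obtain r where r: "r < R" "hr r u" unfolding heavy_def hr_def by auto
        have "(if hr r u then Q u u else 0) \<le> (\<Sum>r<R. if hr r u then Q u u else 0)"
          by (rule member_le_sum) (use r Qnn in auto)
        then show ?thesis using True r by simp
      next
        case False
        then show ?thesis using Qnn by (simp add: sum_nonneg)
      qed
    qed
    also have "\<dots> = (\<Sum>r<R. \<Sum>u\<in>?S. if hr r u then Q u u else 0)" by (rule sum.swap)
    also have "\<dots> \<le> (\<Sum>r<R. 4^l * (\<Sum>a\<in>{a\<in>I. a r \<noteq> 0}. \<Sum>b\<in>{b\<in>I. b r \<noteq> 0}. L {#a, a, b, b#}))"
    proof (intro sum_mono)
      fix r
      let ?J = "{a\<in>I. a r \<noteq> 0}"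
      have "(\<Sum>u\<in>?S. if hr r u then Q u u else 0)
         \<le> (\<Sum>p\<in>?Z. \<Sum>q\<in>{q\<in>?Z. sred q = sred p}. if hr r (sred p) then L {#fst p, fst p, snd q, snd q#} else 0)"
        unfolding Q_def by (rule class_bound[OF fI pe])
      also have "\<dots> \<le> (\<Sum>p\<in>?Z. \<Sum>q\<in>{q\<in>?Z. sred q = sred p}. if fst p \<in> ?J \<and> snd q \<in> ?J then L {#fst p, fst p, snd q, snd q#} else 0)"
      proof (intro sum_mono)
        fix p q assume p: "p \<in> ?Z" and q: "q \<in> {q\<in>?Z. sred q = sred p}"
        have pq: "fst p \<in> I" "snd q \<in> I" "sred q = sred p" using p q by (auto simp: mem_Times_iff)
        show "(if hr r (sred p) then L {#fst p, fst p, snd q, snd q#} else 0)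
           \<le> (if fst p \<in> ?J \<and> snd q \<in> ?J then L {#fst p, fst p, snd q, snd q#} else 0)"
        proof (cases "hr r (sred p)")
          case True
          then have h1: "red1 (fst p r) (snd p r) \<noteq> 0" and h2': "red2 (fst p r) (snd p r) \<noteq> 0"
            unfolding hr_def sred_def by simp_all
          have "red2 (fst q r) (snd q r) = red2 (fst p r) (snd p r)" using sred_r[OF pq(3), of r] by simp
          then have h2: "red2 (fst q r) (snd q r) \<noteq> 0" using h2' by simp
          have "fst p r \<noteq> 0" using h1 unfolding red1_def by (auto split: if_splits)
          moreover have "snd q r \<noteq> 0" using h2 unfolding red2_def by (auto split: if_splits)
          ultimately show ?thesis using pq True by simp
        next
          case False
          then show ?thesis using Lsq[OF pq(1) pq(2)] by simp
        qed
      qed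
      also have "\<dots> \<le> 4^l * (\<Sum>a\<in>?J. \<Sum>b\<in>?J. L {#a, a, b, b#})"
        by (rule count_bound[OF I]) (auto intro: Lsq)
      finally show "(\<Sum>u\<in>?S. if hr r u then Q u u else 0) \<le> 4^l * (\<Sum>a\<in>?J. \<Sum>b\<in>?J. L {#a, a, b, b#})" .
    qed
    also have "\<dots> = 4^l * pE_tau R I L" unfolding pE_tau_def by (simp add: sum_distrib_left)
    finally show ?thesis .
  qed
  have "\<bar>\<Sum>u\<in>?S. \<Sum>v\<in>?S. C u v * Q u v\<bar> \<le> N * (lam * (4^l * pE_tau R I L) + 4^l / lam)"
  proof -
    have "lam * (\<Sum>u\<in>?S. if heavy R u then Q u u else 0) + (\<Sum>u\<in>?S. Q u u) / lam
        \<le> lam * (4^l * pE_tau R I L) + 4^l / lam"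
      using A B lam by (intro add_mono mult_left_mono divide_right_mono) auto
    then show ?thesis using bound Nnn by (meson mult_left_mono order_trans)
  qed
  then show ?thesis unfolding D N_def by simp
qed


lemma const_bound:
  fixes k l :: nat assumes k: "2 \<le> k" and l: "0 < l"
  shows "2 * 4^l * k^(2*l) \<le> k^(5*l)"
proof -
  have a: "(4::nat)^l \<le> k^(2*l)"
  proof -
    have "(4::nat)^l = 2^(2*l)" by (simp add: power_mult)
    also have "\<dots> \<le> k^(2*l)" using k by (intro power_mono) auto
    finally show ?thesis .
  qed
  have b: "2 \<le> k^l" using k l by (meson dual_order.trans le_trans one_le_numeral self_le_power)
  have "2 * 4^l * k^(2*l) \<le> k^l * k^(2*l) * k^(2*l)" using a b by (intro mult_mono) auto
  also have "\<dots> = k^(5*l)" by (simp flip: power_add)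
  finally show ?thesis .
qed

lemma tau_nonneg:
  assumes fI: "finite I" and pe: "pseudo_exp4 I L"
  shows "0 \<le> pE_tau R I L"
  unfolding pE_tau_def by (intro sum_nonneg) (auto intro: Lsq_nonneg[OF fI pe])

theorem theorem6p2:
  "\<exists>C0::real. \<forall>(t::nat) (R::nat) (l::nat) (\<sigma>::nat \<Rightarrow> nat)
      (L :: (nat \<Rightarrow> nat) multiset \<Rightarrow> real).
     t > 0 \<longrightarrow> R > 0 \<longrightarrow> l > 0 \<longrightarrow>
     \<sigma> permutes {0..<2^t} \<longrightarrow> \<sigma> 0 = 0 \<longrightarrow>
     pseudo_exp4 (multi_indices (2^t) R l) L \<longrightarrow>
     pE_norm4 (multi_indices (2^t) R l) L \<le> 1 \<longrightarrow>
     \<bar>pE_moment4 R (multi_indices (2^t) R l) L (X_space t R) (X_val t \<sigma>)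
      - pE_moment4 R (multi_indices (2^t) R l) L (Y_space (2^t) R) Y_val\<bar>
     \<le> real (2^t) powr (C0 * real l) * sqrt (pE_tau R (multi_indices (2^t) R l) L)"
proof (intro exI[of _ 5] allI impI)
  fix t R l :: nat and \<sigma> :: "nat \<Rightarrow> nat" and L :: "(nat \<Rightarrow> nat) multiset \<Rightarrow> real"
  assume t: "t > 0" and R: "R > 0" and l: "l > 0" and sp: "\<sigma> permutes {0..<2^t}" and s0: "\<sigma> 0 = 0"
    and pe: "pseudo_exp4 (multi_indices (2^t) R l) L" and nm: "pE_norm4 (multi_indices (2^t) R l) L \<le> 1"
  define I where "I = multi_indices (2^t) R l"
  define D where "D = \<bar>pE_moment4 R I L (X_space t R) (X_val t \<sigma>) - pE_moment4 R I L (Y_space (2^t) R) Y_val\<bar>"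
  define \<tau> where "\<tau> = pE_tau R I L"
  define N where "N = real ((2::nat)^t)^(2*l)"
  define K where "K = real (2^t) powr (5 * real l)"
  have fI: "finite I" unfolding I_def by (rule mi_finite)
  have peI: "pseudo_exp4 I L" using pe unfolding I_def .
  have mb: "\<And>lam. lam > 0 \<Longrightarrow> D \<le> N * (lam * (4^l * \<tau>) + 4^l / lam)"
    unfolding D_def N_def \<tau>_def using main_bound[OF sp s0 I_def peI nm[folded I_def]] by simp
  have tn: "0 \<le> \<tau>" unfolding \<tau>_def by (rule tau_nonneg[OF fI peI])
  have Nn: "0 \<le> N" unfolding N_def by simp
  have k2: "(2::nat) \<le> 2^t" using t by (metis One_nat_def Suc_leI one_less_numeral_iff power_increasing_iff power_one_right semiring_norm(76))
  have KN: "2 * 4^l * N \<le> K"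
  proof -
    have "real (2 * 4^l * (2^t)^(2*l)) \<le> real ((2^t)^(5*l))"
      using const_bound[OF k2 l] by (simp only: of_nat_le_iff)
    moreover have "K = real (2^t) ^ (5*l)" unfolding K_def
      by (subst powr_realpow[symmetric]) auto
    ultimately show ?thesis unfolding N_def by simp
  qed
  have Dn: "0 \<le> D" unfolding D_def by simp
  show "\<bar>pE_moment4 R (multi_indices (2^t) R l) L (X_space t R) (X_val t \<sigma>)
      - pE_moment4 R (multi_indices (2^t) R l) L (Y_space (2^t) R) Y_val\<bar>
     \<le> real (2^t) powr (5 * real l) * sqrt (pE_tau R (multi_indices (2^t) R l) L)"
    unfolding D_def[unfolded I_def, symmetric] K_def[symmetric] \<tau>_def[unfolded I_def, symmetric]
  proof (cases "\<tau> = 0")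
    case False
    then have tp: "\<tau> > 0" using tn by simp
    define lam where "lam = 1 / sqrt \<tau>"
    have lp: "lam > 0" unfolding lam_def using tp by simp
    have s: "sqrt \<tau> * sqrt \<tau> = \<tau>" using tn by simp
    have "lam * (4^l * \<tau>) + 4^l / lam = 2 * 4^l * sqrt \<tau>"
      unfolding lam_def using tp s by (simp add: field_simps)
    then have "D \<le> N * (2 * 4^l * sqrt \<tau>)" using mb[OF lp] by simp
    also have "\<dots> = (2 * 4^l * N) * sqrt \<tau>" by simp
    also have "\<dots> \<le> K * sqrt \<tau>" using KN tn by (intro mult_right_mono) auto
    finally show "D \<le> K * sqrt \<tau>" .
  next
    case True
    have "D \<le> 0"
    proof (rule ccontr)
      assume "\<not> D \<le> 0"
      then have Dp: "D > 0" by simp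
      define M0 where "M0 = N * 4^l"
      have M0: "0 \<le> M0" unfolding M0_def using Nn by simp
      define lam where "lam = (M0 + 1) / D"
      have lp: "lam > 0" unfolding lam_def using Dp M0 by simp
      have "D \<le> N * (4^l / lam)" using mb[OF lp] True by simp
      also have "\<dots> = M0 * D / (M0 + 1)" unfolding lam_def M0_def using Dp M0 by (simp add: field_simps)
      also have "\<dots> < D" using Dp M0 by (simp add: field_simps)
      finally show False by simp
    qed
    then show "D \<le> K * sqrt \<tau>" using True by simp
  qed
qed


end
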